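(* Let $X$, $Y_k$ ($k\in\mathbb N$) and norms $\|\cdot\|_{X\oplus Y_k}$ be as in the generalized $\ell^2$-sum setting. (A) For every $x+\sum_k y_k\in\Sigma(X\oplus Y_k)$, $$\max\Big\{\|x\|_X,\tfrac12\Big(\sum_k\|y_k\|_{Y_k}^2\Big)^{1/2}\Big\}\le\Big\|x+\sum_k y_k\Big\|_\Sigma\le\|x\|_X+\Big(\sum_k\|y_k\|_{Y_k}^2\Big)^{1/2}.$$ In particular, $(\Sigma(X\oplus Y_k),\|\cdot\|_\Sigma)$ is isomorphic to the standard $\ell^2$-sum of $X,Y_1,Y_2,\dots$. (B) The dual norm of $\|\cdot\|_\Sigma$ satisfies, for $x^*\in X^*$, $y_k^*\in Y_k^*$ with $\sum_k\|y_k^*\|_{Y_k}^2<\infty$, $$\max\Big\{\|x^*\|_X,\Big(\sum_k\|y_k^*\|_{Y_k}^2\Big)^{1/2}\Big\}\le\Big\|x^*+\sum_k y_k^*\Big\|_\Sigma\le\|x^*\|_X+2\Big(\sum_k\|y_k^*\|_{Y_k}^2\Big)^{1/2}.$$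
   Context: Setting: $(X,\|\cdot\|_X)$ and $(Y_k,\|\cdot\|_{Y_k})$, $k\in\mathbb N$, are Banach spaces; for each $k$, $\|\cdot\|_{X\oplus Y_k}$ is a norm on $X\oplus Y_k$ coinciding with $\|\cdot\|_X$ on $X$ and with $\|\cdot\|_{Y_k}$ on $Y_k$, and monotone: $\|x+y_k\|_{X\oplus Y_k}\ge\|x\|_X$. Duals of direct sums are identified with direct sums of duals via $(x^*+y^* )(x+y)=x^*(x)+y^*(y)$. $\Lambda(X\oplus Y_k)$ is the set of functionals $x^*+\sum_k\alpha_ky_k^*$ with $x^*\in X^*$, $y_k^*\in Y_k^*$, $\|x^*+y_k^*\|_{X\oplus Y_k}\le1$ for all $k$, $0\le\alpha_k\le1$, $\sum\alpha_k^2\le1$. $\Sigma(X\oplus Y_k)=\{x+y_1+y_2+\dots:x\in X,y_k\in Y_k,\sum\|y_k\|_{Y_k}^2<\infty\}$ with $\|z\|_\Sigma=\sup\{|z^*(z)|:z^*\in\Lambda(X\oplus Y_k)\}$; the dual norm is also denoted $\|\cdot\|_\Sigma$. *)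

theory Defs
  imports "HOL-Analysis.Analysis"
begin

text \<open>The family of Banach
spaces Y_k (k in nat) is represented by closed linear subspaces Y k of a common
Banach type 'y::banach, with the inherited norm. The norm on the direct sum X + Y_k
is a function N k x y, defined for x in X and y in Y k.
Functionals on Y_k are real functions on 'y, linear and bounded on Y k
(only their values on Y k matter).\<close>

definition gen_l2_setting :: "(nat \<Rightarrow> 'y::banach set) \<Rightarrow> (nat \<Rightarrow> 'x::banach \<Rightarrow> 'y \<Rightarrow> real) \<Rightarrow> bool" where
  "gen_l2_setting Y N \<longleftrightarrow>
     (\<forall>k. subspace (Y k) \<and> closed (Y k)) \<and>
     (\<forall>k x y. y \<in> Y k \<longrightarrow> 0 \<le> N k x y) \<and>
     (\<forall>k x y. y \<in> Y k \<longrightarrow> N k x y = 0 \<longrightarrow> x = 0 \<and> y = 0) \<and>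
     (\<forall>k c x y. y \<in> Y k \<longrightarrow> N k (c *\<^sub>R x) (c *\<^sub>R y) = \<bar>c\<bar> * N k x y) \<and>
     (\<forall>k x y x' y'. y \<in> Y k \<longrightarrow> y' \<in> Y k \<longrightarrow> N k (x + x') (y + y') \<le> N k x y + N k x' y') \<and>
     (\<forall>k x. N k x 0 = norm x) \<and>
     (\<forall>k y. y \<in> Y k \<longrightarrow> N k 0 y = norm y) \<and>
     (\<forall>k x y. y \<in> Y k \<longrightarrow> norm x \<le> N k x y)"

definition dual_on :: "'a::real_normed_vector set \<Rightarrow> ('a \<Rightarrow> real) set" where
  "dual_on S = {f. (\<forall>a\<in>S. \<forall>b\<in>S. f (a + b) = f a + f b) \<and>
                    (\<forall>c. \<forall>a\<in>S. f (c *\<^sub>R a) = c * f a) \<and>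
                    (\<exists>B. \<forall>a\<in>S. \<bar>f a\<bar> \<le> B * norm a)}"

definition dnorm_on :: "'a::real_normed_vector set \<Rightarrow> ('a \<Rightarrow> real) \<Rightarrow> real" where
  "dnorm_on S f = Sup {\<bar>f a\<bar> | a. a \<in> S \<and> norm a \<le> 1}"

definition sum_dnorm :: "(nat \<Rightarrow> 'y::banach set) \<Rightarrow> (nat \<Rightarrow> 'x::banach \<Rightarrow> 'y \<Rightarrow> real) \<Rightarrow> nat
    \<Rightarrow> ('x \<Rightarrow>\<^sub>L real) \<Rightarrow> ('y \<Rightarrow> real) \<Rightarrow> real" where
  "sum_dnorm Y N k xs ys = Sup {\<bar>blinfun_apply xs x + ys y\<bar> | x y. y \<in> Y k \<and> N k x y \<le> 1}"

definition Lambda_set :: "(nat \<Rightarrow> 'y::banach set) \<Rightarrow> (nat \<Rightarrow> 'x::banach \<Rightarrow> 'y \<Rightarrow> real)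
    \<Rightarrow> (('x \<Rightarrow>\<^sub>L real) \<times> (nat \<Rightarrow> 'y \<Rightarrow> real) \<times> (nat \<Rightarrow> real)) set" where
  "Lambda_set Y N = {(xs, ys, \<alpha>).
      (\<forall>k. ys k \<in> dual_on (Y k)) \<and>
      (\<forall>k. sum_dnorm Y N k xs (ys k) \<le> 1) \<and>
      (\<forall>k. 0 \<le> \<alpha> k \<and> \<alpha> k \<le> 1) \<and>
      summable (\<lambda>k. (\<alpha> k)\<^sup>2) \<and> (\<Sum>k. (\<alpha> k)\<^sup>2) \<le> 1}"

definition Sigma_sp :: "(nat \<Rightarrow> 'y::banach set) \<Rightarrow> ('x::banach \<times> (nat \<Rightarrow> 'y)) set" where
  "Sigma_sp Y = {(x, y). (\<forall>k. y k \<in> Y k) \<and> summable (\<lambda>k. (norm (y k))\<^sup>2)}"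

definition sigma_norm :: "(nat \<Rightarrow> 'y::banach set) \<Rightarrow> (nat \<Rightarrow> 'x::banach \<Rightarrow> 'y \<Rightarrow> real)
    \<Rightarrow> 'x \<Rightarrow> (nat \<Rightarrow> 'y) \<Rightarrow> real" where
  "sigma_norm Y N x y = Sup {\<bar>blinfun_apply xs x + (\<Sum>k. \<alpha> k * ys k (y k))\<bar> | xs ys \<alpha>. (xs, ys, \<alpha>) \<in> Lambda_set Y N}"

definition sigma_dual_norm :: "(nat \<Rightarrow> 'y::banach set) \<Rightarrow> (nat \<Rightarrow> 'x::banach \<Rightarrow> 'y \<Rightarrow> real)
    \<Rightarrow> ('x \<Rightarrow>\<^sub>L real) \<Rightarrow> (nat \<Rightarrow> 'y \<Rightarrow> real) \<Rightarrow> real" where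
  "sigma_dual_norm Y N xs ys = Sup {\<bar>blinfun_apply xs x + (\<Sum>k. ys k (y k))\<bar> | x y.
       (x, y) \<in> Sigma_sp Y \<and> sigma_norm Y N x y \<le> 1}"

end

theory Submission
  imports Defs "HOL-Analysis.Analysis"
begin


definition hb_good :: "'a::real_normed_vector \<Rightarrow> ('a \<times> real) set \<Rightarrow> bool" where
 "hb_good a G \<longleftrightarrow> (\<forall>x u v. (x,u)\<in>G \<longrightarrow> (x,v)\<in>G \<longrightarrow> u = v) \<and> (a, norm a) \<in> G \<and>
    (\<forall>x u y v. (x,u)\<in>G \<longrightarrow> (y,v)\<in>G \<longrightarrow> (x+y, u+v)\<in>G) \<and>
    (\<forall>x u c. (x,u)\<in>G \<longrightarrow> (c *\<^sub>R x, c*u)\<in>G) \<and>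
    (\<forall>x u. (x,u)\<in>G \<longrightarrow> u \<le> norm x)"

lemma hb_init: "hb_good a {(t *\<^sub>R a, t * norm a) | t. True}"
proof -
  have f: "u = v" if "t *\<^sub>R a = t' *\<^sub>R a" "u = t * norm a" "v = t' * norm a" for t t' u v
  proof (cases "a = 0")
    case True then show ?thesis using that by simp
  next
    case False
    then have "t = t'" using that(1) by (metis scaleR_cancel_right)
    then show ?thesis using that by simp
  qed
  show ?thesis unfolding hb_good_def
  proof (intro conjI allI impI)
    show "(a, norm a) \<in> {(t *\<^sub>R a, t * norm a) | t. True}" by (rule CollectI, rule exI[of _ 1]) simp
  next
    fix x u v assume "(x,u) \<in> {(t *\<^sub>R a, t * norm a) | t. True}" "(x,v) \<in> {(t *\<^sub>R a, t * norm a) | t. True}"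
    then show "u = v" using f by auto
  next
    fix x u y v assume "(x,u) \<in> {(t *\<^sub>R a, t * norm a) | t. True}" "(y,v) \<in> {(t *\<^sub>R a, t * norm a) | t. True}"
    then obtain t t' where "x = t *\<^sub>R a" "u = t * norm a" "y = t' *\<^sub>R a" "v = t' * norm a" by auto
    then show "(x+y, u+v) \<in> {(t *\<^sub>R a, t * norm a) | t. True}"
      by (auto intro!: exI[of _ "t+t'"] simp: scaleR_add_left distrib_right)
  next
    fix x u c assume "(x,u) \<in> {(t *\<^sub>R a, t * norm a) | t. True}"
    then obtain t where "x = t *\<^sub>R a" "u = t * norm a" by auto
    then show "(c *\<^sub>R x, c*u) \<in> {(t *\<^sub>R a, t * norm a) | t. True}"
      by (auto intro!: exI[of _ "c*t"])
  next
    fix x u assume "(x,u) \<in> {(t *\<^sub>R a, t * norm a) | t. True}"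
    then obtain t where "x = t *\<^sub>R a" "u = t * norm a" by auto
    then show "u \<le> norm x" by (simp add: abs_ge_self mult_right_mono)
  qed
qed

lemma hb_chain:
  assumes C: "C \<in> chains {G. hb_good a G}" and ne: "C \<noteq> {}"
  shows "hb_good a (\<Union>C)"
proof -
  have g: "\<And>G. G \<in> C \<Longrightarrow> hb_good a G" using C chainsD2 by blast
  have two: "\<exists>G\<in>C. p \<in> G \<and> q \<in> G" if pq: "p \<in> \<Union>C" "q \<in> \<Union>C" for p q
  proof -
    obtain G1 where g1: "G1 \<in> C" "p \<in> G1" using pq(1) by blast
    obtain G2 where g2: "G2 \<in> C" "q \<in> G2" using pq(2) by blast
    show ?thesis using chainsD[OF C g1(1) g2(1)] g1 g2 by blast
  qed
  show ?thesis unfolding hb_good_def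
  proof (intro conjI allI impI)
    fix x u v assume "(x,u) \<in> \<Union>C" "(x,v) \<in> \<Union>C"
    then obtain G where "G\<in>C" "(x,u)\<in>G" "(x,v)\<in>G" using two by blast
    then show "u = v" using g unfolding hb_good_def by blast
  next
    obtain G where "G \<in> C" using ne by blast
    then show "(a, norm a) \<in> \<Union>C" using g unfolding hb_good_def by blast
  next
    fix x u y v assume "(x,u) \<in> \<Union>C" "(y,v) \<in> \<Union>C"
    then obtain G where "G\<in>C" "(x,u)\<in>G" "(y,v)\<in>G" using two by blast
    then show "(x+y, u+v) \<in> \<Union>C" using g unfolding hb_good_def by blast
  next
    fix x u c assume "(x,u) \<in> \<Union>C"
    then obtain G where "G\<in>C" "(x,u)\<in>G" by blast
    then show "(c *\<^sub>R x, c*u) \<in> \<Union>C" using g unfolding hb_good_def by blast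
  next
    fix x u assume "(x,u) \<in> \<Union>C"
    then obtain G where "G\<in>C" "(x,u)\<in>G" by blast
    then show "u \<le> norm x" using g unfolding hb_good_def by blast
  qed
qed

lemma hb_extend:
  assumes M: "hb_good a M" and z: "z \<notin> fst ` M"
  shows "\<exists>G. hb_good a G \<and> M \<subseteq> G \<and> G \<noteq> M"
proof -
  have fnc: "\<And>x u v. (x,u)\<in>M \<Longrightarrow> (x,v)\<in>M \<Longrightarrow> u = v"
   and add: "\<And>x u y v. (x,u)\<in>M \<Longrightarrow> (y,v)\<in>M \<Longrightarrow> (x+y, u+v)\<in>M"
   and scl: "\<And>x u c. (x,u)\<in>M \<Longrightarrow> (c *\<^sub>R x, c*u)\<in>M"
   and bnd: "\<And>x u. (x,u)\<in>M \<Longrightarrow> u \<le> norm x"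
   and am: "(a, norm a) \<in> M" using M unfolding hb_good_def by blast+
  define L where "L = {u - norm (s - z) | s u. (s,u) \<in> M}"
  have key: "u - norm (s - z) \<le> norm (s' + z) - u'" if "(s,u)\<in>M" "(s',u')\<in>M" for s u s' u'
  proof -
    have "u + u' \<le> norm (s + s')" using bnd[OF add[OF that]] .
    also have "s + s' = (s - z) + (s' + z)" by simp
    also have "norm ((s - z) + (s' + z)) \<le> norm (s - z) + norm (s' + z)" by (rule norm_triangle_ineq)
    finally show ?thesis by simp
  qed
  define c where "c = Sup L"
  have Lne: "L \<noteq> {}" using am unfolding L_def by blast
  have Lbdd: "bdd_above L" unfolding L_def by (rule bdd_aboveI[where M="norm (a + z) - norm a"]) (use key[OF _ am] in blast)
  have c1: "u - norm (s - z) \<le> c" if "(s,u)\<in>M" for s u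
    unfolding c_def by (rule cSup_upper[OF _ Lbdd]) (use that L_def in blast)
  have c2: "c \<le> norm (s' + z) - u'" if "(s',u')\<in>M" for s' u'
    unfolding c_def by (rule cSup_least[OF Lne]) (use that key L_def in blast)
  define G where "G = {(s + t *\<^sub>R z, u + t * c) | s u t. (s,u) \<in> M}"
  have zero: "(0, 0) \<in> M" using scl[OF am, of 0] by simp
  have MG: "M \<subseteq> G"
  proof
    fix p assume "p \<in> M"
    moreover obtain s u where "p = (s,u)" by fastforce
    ultimately show "p \<in> G" unfolding G_def by (intro CollectI exI[of _ s] exI[of _ u] exI[of _ 0]) simp
  qed
  have zG: "(z, c) \<in> G" unfolding G_def using zero by (intro CollectI exI[of _ 0] exI[of _ "0::real"] exI[of _ "1::real"]) simp
  have GM: "G \<noteq> M" using zG z by force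
  have uniq: "t = t' \<and> s = s'" if "(s,u)\<in>M" "(s',u')\<in>M" "s + t *\<^sub>R z = s' + t' *\<^sub>R z" for s u s' u' t t'
  proof (rule ccontr)
    assume nt: "\<not> (t = t' \<and> s = s')"
    then have tt: "t \<noteq> t'" using that(3) by auto
    have "(s' + (-1) *\<^sub>R s, u' + (-1) * u) \<in> M" using add[OF that(2) scl[OF that(1)]] .
    then have "((1/(t - t')) *\<^sub>R (s' + (-1) *\<^sub>R s), (1/(t-t')) * (u' + (-1) * u)) \<in> M" by (rule scl)
    moreover have "(1/(t - t')) *\<^sub>R (s' + (-1) *\<^sub>R s) = z"
    proof -
      have "s' - s = (t - t') *\<^sub>R z" using that(3) by (simp add: algebra_simps)
      then show ?thesis using tt by simp
    qed
    ultimately show False using z by force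
  qed
  have "hb_good a G" unfolding hb_good_def
  proof (intro conjI allI impI)
    fix x u v assume "(x,u) \<in> G" "(x,v) \<in> G"
    then obtain s1 u1 t1 s2 u2 t2 where "(s1,u1)\<in>M" "(s2,u2)\<in>M" "x = s1 + t1 *\<^sub>R z" "u = u1 + t1 * c"
      "x = s2 + t2 *\<^sub>R z" "v = u2 + t2 * c" unfolding G_def by blast
    then show "u = v" using uniq[of s1 u1 s2 u2 t1 t2] fnc by metis
  next
    show "(a, norm a) \<in> G" using am MG by blast
  next
    fix x u y v assume "(x,u) \<in> G" "(y,v) \<in> G"
    then obtain s1 u1 t1 s2 u2 t2 where "(s1,u1)\<in>M" "(s2,u2)\<in>M" "x = s1 + t1 *\<^sub>R z" "u = u1 + t1 * c"
      "y = s2 + t2 *\<^sub>R z" "v = u2 + t2 * c" unfolding G_def by blast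
    moreover have "x + y = (s1 + s2) + (t1 + t2) *\<^sub>R z" "u + v = (u1 + u2) + (t1+t2) * c"
      using calculation by (auto simp: algebra_simps)
    ultimately show "(x+y, u+v) \<in> G" unfolding G_def using add by blast
  next
    fix x u d assume "(x,u) \<in> G"
    then obtain s1 u1 t1 where "(s1,u1)\<in>M" "x = s1 + t1 *\<^sub>R z" "u = u1 + t1 * c" unfolding G_def by blast
    moreover have "d *\<^sub>R x = d *\<^sub>R s1 + (d*t1) *\<^sub>R z" "d * u = d * u1 + (d*t1) * c"
      using calculation by (auto simp: algebra_simps)
    ultimately show "(d *\<^sub>R x, d*u) \<in> G" unfolding G_def using scl by blast
  next
    fix x u assume "(x,u) \<in> G"
    then obtain s t w where sM: "(s,w)\<in>M" and x: "x = s + t *\<^sub>R z" and u: "u = w + t * c" unfolding G_def by blast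
    consider "t = 0" | "t > 0" | "t < 0" by linarith
    then show "u \<le> norm x"
    proof cases
      case 1 then show ?thesis using bnd[OF sM] x u by simp
    next
      case 2
      have "c \<le> norm ((1/t) *\<^sub>R s + z) - (1/t) * w" using c2[OF scl[OF sM]] .
      then have "t * c \<le> t * (norm ((1/t) *\<^sub>R s + z) - (1/t) * w)" using 2 by (simp add: mult_left_mono)
      also have "\<dots> = norm (t *\<^sub>R ((1/t) *\<^sub>R s + z)) - w" using 2 by (simp add: right_diff_distrib)
      also have "t *\<^sub>R ((1/t) *\<^sub>R s + z) = x" using 2 x by (simp add: scaleR_add_right)
      finally show ?thesis using u by simp
    next
      case 3
      have "(1/(-t)) * w - norm ((1/(-t)) *\<^sub>R s - z) \<le> c" using c1[OF scl[OF sM]] .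
      then have "(-t) * ((1/(-t)) * w - norm ((1/(-t)) *\<^sub>R s - z)) \<le> (-t) * c" using 3 by (simp add: mult_left_mono)
      also have "(-t) * ((1/(-t)) * w - norm ((1/(-t)) *\<^sub>R s - z)) = w - norm ((-t) *\<^sub>R ((1/(-t)) *\<^sub>R s - z))"
        using 3 by (simp add: right_diff_distrib)
      also have "(-t) *\<^sub>R ((1/(-t)) *\<^sub>R s - z) = x" using 3 x by (simp add: scaleR_diff_right)
      finally show ?thesis using u by simp
    qed
  qed
  then show ?thesis using MG GM by blast
qed

lemma hahn_banach_norming:
  fixes a :: "'a::real_normed_vector"
  shows "\<exists>f. linear f \<and> (\<forall>v. \<bar>f v\<bar> \<le> norm v) \<and> f a = norm a"
proof -
  have "\<exists>M\<in>{G. hb_good a G}. \<forall>X\<in>{G. hb_good a G}. M \<subseteq> X \<longrightarrow> X = M"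
  proof (rule Zorn_Lemma2, intro ballI)
    fix C assume C: "C \<in> chains {G. hb_good a G}"
    show "\<exists>U\<in>{G. hb_good a G}. \<forall>X\<in>C. X \<subseteq> U"
    proof (cases "C = {}")
      case True then show ?thesis using hb_init by blast
    next
      case False then show ?thesis using hb_chain[OF C] by blast
    qed
  qed
  then obtain M where M: "hb_good a M" and max: "\<And>X. hb_good a X \<Longrightarrow> M \<subseteq> X \<Longrightarrow> X = M"
    by (metis mem_Collect_eq)
  have dom: "x \<in> fst ` M" for x
  proof (rule ccontr)
    assume "x \<notin> fst ` M"
    then obtain G where "hb_good a G" "M \<subseteq> G" "G \<noteq> M" using hb_extend[OF M] by blast
    then show False using max by blast
  qed
  have fnc: "\<And>x u v. (x,u)\<in>M \<Longrightarrow> (x,v)\<in>M \<Longrightarrow> u = v"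
   and add: "\<And>x u y v. (x,u)\<in>M \<Longrightarrow> (y,v)\<in>M \<Longrightarrow> (x+y, u+v)\<in>M"
   and scl: "\<And>x u c. (x,u)\<in>M \<Longrightarrow> (c *\<^sub>R x, c*u)\<in>M"
   and bnd: "\<And>x u. (x,u)\<in>M \<Longrightarrow> u \<le> norm x"
   and am: "(a, norm a) \<in> M" using M unfolding hb_good_def by blast+
  define f where "f x = (THE u. (x,u) \<in> M)" for x
  have fM: "(x, f x) \<in> M" for x
  proof -
    obtain u where "(x,u) \<in> M" using dom[of x] by force
    then show ?thesis unfolding f_def by (rule theI) (use fnc \<open>(x,u) \<in> M\<close> in blast)
  qed
  have fe: "f x = u" if "(x,u) \<in> M" for x u using fnc[OF that fM] by simp
  have lin: "linear f"
  proof (rule linearI)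
    show "f (x + y) = f x + f y" for x y using fe[OF add[OF fM fM]] .
    show "f (c *\<^sub>R x) = c *\<^sub>R f x" for c x using fe[OF scl[OF fM]] by simp
  qed
  have "\<bar>f v\<bar> \<le> norm v" for v
  proof -
    have "f v \<le> norm v" using bnd[OF fM] .
    moreover have "f (-v) \<le> norm (-v)" using bnd[OF fM] .
    moreover have "f (-v) = - f v" using linear_neg[OF lin] .
    ultimately show ?thesis by simp
  qed
  then show ?thesis using lin fe[OF am] by blast
qed




lemma unit_scale:
  assumes S: "subspace S" and hom: "\<And>c a. a \<in> S \<Longrightarrow> f (c *\<^sub>R a) = c * f a"
    and b: "\<And>a. a \<in> S \<Longrightarrow> norm a \<le> 1 \<Longrightarrow> \<bar>f a\<bar> \<le> M" and y: "y \<in> S"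
  shows "\<bar>f y\<bar> \<le> M * norm y"
proof (cases "y = 0")
  case True
  have "f y = 0" using hom[OF y, of 0] True by simp
  then show ?thesis using True by simp
next
  case False
  define y' where "y' = (1 / norm y) *\<^sub>R y"
  have "y' \<in> S" unfolding y'_def using S y by (simp add: subspace_scale)
  moreover have "norm y' = 1" unfolding y'_def using False by simp
  ultimately have "\<bar>f y'\<bar> \<le> M" using b by simp
  moreover have "f y' = f y / norm y" unfolding y'_def using hom[OF y] by simp
  ultimately have "\<bar>f y\<bar> / norm y \<le> M" by simp
  then show ?thesis using False by (simp add: divide_le_eq mult.commute)
qed

lemma dual_on_hom: "f \<in> dual_on S \<Longrightarrow> a \<in> S \<Longrightarrow> f (c *\<^sub>R a) = c * f a"
  unfolding dual_on_def by blast

lemma dual_on_zero: "f \<in> dual_on S \<Longrightarrow> subspace S \<Longrightarrow> f 0 = 0"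
  using dual_on_hom[of f S 0 0] subspace_0 by fastforce

lemma dnorm_on_props:
  assumes f: "f \<in> dual_on S" and S: "subspace S"
  shows "bdd_above {\<bar>f a\<bar> | a. a \<in> S \<and> norm a \<le> 1}"
    and "0 \<le> dnorm_on S f"
    and "\<And>y. y \<in> S \<Longrightarrow> \<bar>f y\<bar> \<le> dnorm_on S f * norm y"
proof -
  obtain B where B: "\<And>a. a \<in> S \<Longrightarrow> \<bar>f a\<bar> \<le> B * norm a" using f unfolding dual_on_def by blast
  show bdd: "bdd_above {\<bar>f a\<bar> | a. a \<in> S \<and> norm a \<le> 1}"
  proof (rule bdd_aboveI[where M="\<bar>B\<bar>"])
    fix r assume "r \<in> {\<bar>f a\<bar> | a. a \<in> S \<and> norm a \<le> 1}"
    then obtain a where a: "a \<in> S" "norm a \<le> 1" "r = \<bar>f a\<bar>" by blast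
    have "B * norm a \<le> \<bar>B\<bar> * 1" using a(2) by (meson abs_ge_self abs_le_D1 abs_mult_pos mult_le_cancel_left1 mult_mono norm_ge_zero order_trans abs_ge_zero mult_left_le)
    then show "r \<le> \<bar>B\<bar>" using B[OF a(1)] a(3) by simp
  qed
  have ne: "\<bar>f 0\<bar> \<in> {\<bar>f a\<bar> | a. a \<in> S \<and> norm a \<le> 1}" using subspace_0[OF S] by auto
  show "0 \<le> dnorm_on S f" unfolding dnorm_on_def
    using cSup_upper[OF ne bdd] dual_on_zero[OF f S] by simp
  fix y assume y: "y \<in> S"
  show "\<bar>f y\<bar> \<le> dnorm_on S f * norm y"
  proof (rule unit_scale[OF S _ _ y])
    show "f (c *\<^sub>R a) = c * f a" if "a \<in> S" for c a using dual_on_hom[OF f that] .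
    show "\<bar>f a\<bar> \<le> dnorm_on S f" if "a \<in> S" "norm a \<le> 1" for a
      unfolding dnorm_on_def by (rule cSup_upper[OF _ bdd]) (use that in blast)
  qed
qed

lemma CS_series:
  fixes a b :: "nat \<Rightarrow> real"
  assumes a0: "\<And>k. 0 \<le> a k" and b0: "\<And>k. 0 \<le> b k"
    and sa: "summable (\<lambda>k. (a k)\<^sup>2)" and sb: "summable (\<lambda>k. (b k)\<^sup>2)"
  shows "summable (\<lambda>k. a k * b k) \<and> (\<Sum>k. a k * b k) \<le> sqrt (\<Sum>k. (a k)\<^sup>2) * sqrt (\<Sum>k. (b k)\<^sup>2)"
proof -
  have amgm: "a k * b k \<le> ((a k)\<^sup>2 + (b k)\<^sup>2) / 2" for k
    using sum_squares_bound[of "a k" "b k"] by (simp add: power2_eq_square)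
  have s: "summable (\<lambda>k. a k * b k)"
  proof (rule summable_comparison_test[where g="\<lambda>k. ((a k)\<^sup>2 + (b k)\<^sup>2) / 2"])
    show "\<exists>N. \<forall>n\<ge>N. norm (a n * b n) \<le> ((a n)\<^sup>2 + (b n)\<^sup>2) / 2"
      using amgm a0 b0 by simp
    show "summable (\<lambda>k. ((a k)\<^sup>2 + (b k)\<^sup>2) / 2)" using sa sb by (intro summable_divide summable_add)
  qed
  define A where "A = (\<Sum>k. (a k)\<^sup>2)"
  define B where "B = (\<Sum>k. (b k)\<^sup>2)"
  have A0: "0 \<le> A" unfolding A_def by (rule suminf_nonneg[OF sa]) simp
  have B0: "0 \<le> B" unfolding B_def by (rule suminf_nonneg[OF sb]) simp
  have "(\<Sum>k. a k * b k) \<le> sqrt A * sqrt B"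
  proof (cases "A = 0 \<or> B = 0")
    case True
    then have "\<forall>k. a k * b k = 0"
    proof
      assume "A = 0"
      then have "\<forall>k. (a k)\<^sup>2 = 0" using suminf_eq_zero_iff[OF sa] unfolding A_def by simp
      then show ?thesis by simp
    next
      assume "B = 0"
      then have "\<forall>k. (b k)\<^sup>2 = 0" using suminf_eq_zero_iff[OF sb] unfolding B_def by simp
      then show ?thesis by simp
    qed
    then have "(\<lambda>k. a k * b k) = (\<lambda>k. 0)" by (intro ext) blast
    then show ?thesis using A0 B0 by simp
  next
    case False
    then have Ap: "A > 0" and Bp: "B > 0" using A0 B0 by auto
    define l where "l = sqrt B / sqrt A"
    have lp: "l > 0" unfolding l_def using Ap Bp by simp
    have pt: "a k * b k \<le> (l * (a k)\<^sup>2 + (b k)\<^sup>2 / l) / 2" for k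
    proof -
      define r where "r = sqrt l"
      have rp: "r > 0" and lr: "l = r * r" unfolding r_def using lp by auto
      have "0 \<le> (r * a k - b k / r)\<^sup>2" by simp
      also have "(r * a k - b k / r)\<^sup>2 = l * (a k)\<^sup>2 + (b k)\<^sup>2 / l - 2 * a k * b k"
        unfolding lr using rp by (simp add: power2_eq_square field_simps)
      finally show ?thesis by simp
    qed
    have "(\<Sum>k. a k * b k) \<le> (\<Sum>k. (l * (a k)\<^sup>2 + (b k)\<^sup>2 / l) / 2)"
      by (rule suminf_le[OF pt s]) (use sa sb in \<open>intro summable_divide summable_add summable_mult\<close>)
    also have "\<dots> = (l * A + B / l) / 2"
    proof -
      have s1: "summable (\<lambda>k. l * (a k)\<^sup>2)" using sa by (rule summable_mult)
      have s2: "summable (\<lambda>k. (b k)\<^sup>2 / l)" using sb by (rule summable_divide)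
      have "(\<Sum>k. (l * (a k)\<^sup>2 + (b k)\<^sup>2 / l) / 2) = (\<Sum>k. (l * (a k)\<^sup>2 + (b k)\<^sup>2 / l)) / 2"
        by (rule suminf_divide) (use s1 s2 in \<open>rule summable_add\<close>)
      also have "(\<Sum>k. (l * (a k)\<^sup>2 + (b k)\<^sup>2 / l)) = (\<Sum>k. l * (a k)\<^sup>2) + (\<Sum>k. (b k)\<^sup>2 / l)"
        by (rule suminf_add[OF s1 s2, symmetric])
      also have "(\<Sum>k. l * (a k)\<^sup>2) = l * A" unfolding A_def by (rule suminf_mult[OF sa])
      also have "(\<Sum>k. (b k)\<^sup>2 / l) = B / l" unfolding B_def by (rule suminf_divide[OF sb])
      finally show ?thesis .
    qed
    also have "\<dots> = sqrt A * sqrt B"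
      unfolding l_def using Ap Bp by (simp add: field_simps power2_eq_square[symmetric])
    finally show ?thesis .
  qed
  then show ?thesis using s A_def B_def by simp
qed




lemma setting:
  assumes "gen_l2_setting Y N"
  shows "subspace (Y k)" "N k x 0 = norm x" "y \<in> Y k \<Longrightarrow> N k 0 y = norm y"
    "y \<in> Y k \<Longrightarrow> norm x \<le> N k x y"
    "y \<in> Y k \<Longrightarrow> y' \<in> Y k \<Longrightarrow> N k (x + x') (y + y') \<le> N k x y + N k x' y'"
  using assms unfolding gen_l2_setting_def by simp_all

lemma ny:
  assumes G: "gen_l2_setting Y N" and y: "y \<in> Y k"
  shows "norm y \<le> 2 * N k x y"
proof -
  have "N k (x + - x) (y + 0) \<le> N k x y + N k (-x) 0"
    using setting(5)[OF G y subspace_0[OF setting(1)[OF G]]] .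
  then have "norm y \<le> N k x y + norm x" using setting(2,3)[OF G] y by simp
  then show ?thesis using setting(4)[OF G y, of x] by simp
qed

lemma lambda_memI:
  assumes G: "gen_l2_setting Y N"
    and d: "\<And>k. ys k \<in> dual_on (Y k)"
    and b: "\<And>k x y. y \<in> Y k \<Longrightarrow> N k x y \<le> 1 \<Longrightarrow> \<bar>blinfun_apply xs x + ys k y\<bar> \<le> 1"
    and a: "\<And>k. 0 \<le> \<alpha> k \<and> \<alpha> k \<le> 1" "summable (\<lambda>k. (\<alpha> k)\<^sup>2)" "(\<Sum>k. (\<alpha> k)\<^sup>2) \<le> 1"
  shows "(xs, ys, \<alpha>) \<in> Lambda_set Y N"
proof -
  have "sum_dnorm Y N k xs (ys k) \<le> 1" for k
    unfolding sum_dnorm_def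
  proof (rule cSup_least)
    have "N k 0 0 = 0" using setting(2)[OF G] by simp
    then show "{\<bar>blinfun_apply xs x + ys k y\<bar> |x y. y \<in> Y k \<and> N k x y \<le> 1} \<noteq> {}"
    proof -
      have "\<bar>blinfun_apply xs 0 + ys k 0\<bar> \<in> {\<bar>blinfun_apply xs x + ys k y\<bar> |x y. y \<in> Y k \<and> N k x y \<le> 1}"
        using subspace_0[OF setting(1)[OF G, of k]] \<open>N k 0 0 = 0\<close> by (intro CollectI exI[of _ 0]) simp
      then show ?thesis by blast
    qed
    show "r \<le> 1" if "r \<in> {\<bar>blinfun_apply xs x + ys k y\<bar> |x y. y \<in> Y k \<and> N k x y \<le> 1}" for r
      using that b by blast
  qed
  then show ?thesis unfolding Lambda_set_def using d a by blast
qed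

lemma lambda_bounds:
  fixes Y :: "nat \<Rightarrow> 'y::banach set" and N :: "nat \<Rightarrow> 'x::banach \<Rightarrow> 'y \<Rightarrow> real"
  assumes G: "gen_l2_setting Y N" and L: "(xs, ys, \<alpha>) \<in> Lambda_set Y N"
  shows "\<bar>blinfun_apply xs x\<bar> \<le> norm x" and "y \<in> Y k \<Longrightarrow> \<bar>ys k y\<bar> \<le> norm y"
proof -
  have d: "ys k \<in> dual_on (Y k)" for k using L unfolding Lambda_set_def by auto
  have sd: "sum_dnorm Y N k xs (ys k) \<le> 1" for k using L unfolding Lambda_set_def by auto
  have S: "subspace (Y k)" for k using setting(1)[OF G] .
  have bdd: "bdd_above {\<bar>blinfun_apply xs x + ys k y\<bar> |x y. y \<in> Y k \<and> N k x y \<le> 1}" for k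
  proof (rule bdd_aboveI[where M="norm xs + 2 * dnorm_on (Y k) (ys k)"])
    fix r assume "r \<in> {\<bar>blinfun_apply xs x + ys k y\<bar> |x y. y \<in> Y k \<and> N k x y \<le> 1}"
    then obtain x y where r: "r = \<bar>blinfun_apply xs x + ys k y\<bar>" and y: "y \<in> Y k" and n: "N k x y \<le> 1" by blast
    have "\<bar>blinfun_apply xs x\<bar> \<le> norm xs * norm x" using norm_blinfun[of xs x] by simp
    also have "\<dots> \<le> norm xs * 1" using setting(4)[OF G y, of x] n by (intro mult_left_mono) auto
    finally have 1: "\<bar>blinfun_apply xs x\<bar> \<le> norm xs" by simp
    have "\<bar>ys k y\<bar> \<le> dnorm_on (Y k) (ys k) * norm y" using dnorm_on_props(3)[OF d S y] .
    also have "\<dots> \<le> dnorm_on (Y k) (ys k) * 2" using ny[OF G y, of x] n dnorm_on_props(2)[OF d S]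
      by (intro mult_left_mono) auto
    finally have 2: "\<bar>ys k y\<bar> \<le> 2 * dnorm_on (Y k) (ys k)" by simp
    show "r \<le> norm xs + 2 * dnorm_on (Y k) (ys k)" using r 1 2 by linarith
  qed
  have el: "\<bar>blinfun_apply xs x + ys k y\<bar> \<le> 1" if "y \<in> Y k" "N k x y \<le> 1" for k x y
  proof -
    have "\<bar>blinfun_apply xs x + ys k y\<bar> \<le> sum_dnorm Y N k xs (ys k)"
      unfolding sum_dnorm_def by (rule cSup_upper[OF _ bdd]) (use that in blast)
    then show ?thesis using sd[of k] by simp
  qed
  show "\<bar>blinfun_apply xs x\<bar> \<le> norm x"
  proof -
    have "\<bar>blinfun_apply xs x\<bar> \<le> 1 * norm x"
    proof (rule unit_scale[where S=UNIV])
      show "subspace UNIV" by (rule subspace_UNIV)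
      show "blinfun_apply xs (c *\<^sub>R a) = c * blinfun_apply xs a" for c a by (simp add: blinfun.scaleR_right)
      fix a :: 'x assume "norm a \<le> 1"
      then have "\<bar>blinfun_apply xs a + ys 0 0\<bar> \<le> 1"
        using el[of 0 0 a] setting(2)[OF G] subspace_0[OF S] by simp
      then show "\<bar>blinfun_apply xs a\<bar> \<le> 1" using dual_on_zero[OF d S] by simp
    qed simp
    then show ?thesis by simp
  qed
  assume y: "y \<in> Y k"
  have "\<bar>ys k y\<bar> \<le> 1 * norm y"
  proof (rule unit_scale[OF S _ _ y])
    show "ys k (c *\<^sub>R a) = c * ys k a" if "a \<in> Y k" for c a using dual_on_hom[OF d that] .
    fix a assume a: "a \<in> Y k" "norm a \<le> 1"
    then have "\<bar>blinfun_apply xs 0 + ys k a\<bar> \<le> 1" using el[of a k 0] setting(3)[OF G a(1)] by simp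
    then show "\<bar>ys k a\<bar> \<le> 1" by simp
  qed
  then show "\<bar>ys k y\<bar> \<le> norm y" by simp
qed

lemma sn_elem:
  assumes G: "gen_l2_setting Y N" and L: "(xs, ys, \<alpha>) \<in> Lambda_set Y N" and XY: "(x, y) \<in> Sigma_sp Y"
  shows "summable (\<lambda>k. \<alpha> k * ys k (y k))"
    and "\<bar>blinfun_apply xs x + (\<Sum>k. \<alpha> k * ys k (y k))\<bar> \<le> norm x + sqrt (\<Sum>k. (norm (y k))\<^sup>2)"
proof -
  have yk: "y k \<in> Y k" for k using XY unfolding Sigma_sp_def by auto
  have sy: "summable (\<lambda>k. (norm (y k))\<^sup>2)" using XY unfolding Sigma_sp_def by auto
  have a0: "0 \<le> \<alpha> k" "\<alpha> k \<le> 1" for k using L unfolding Lambda_set_def by auto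
  have sa: "summable (\<lambda>k. (\<alpha> k)\<^sup>2)" and sa1: "(\<Sum>k. (\<alpha> k)\<^sup>2) \<le> 1"
    using L unfolding Lambda_set_def by auto
  note cs = CS_series[of \<alpha> "\<lambda>k. norm (y k)", OF a0(1) norm_ge_zero sa sy]
  have pt: "\<bar>\<alpha> k * ys k (y k)\<bar> \<le> \<alpha> k * norm (y k)" for k
    using lambda_bounds(2)[OF G L yk[of k]] a0(1)[of k] by (simp add: abs_mult mult_left_mono)
  have sabs: "summable (\<lambda>k. \<bar>\<alpha> k * ys k (y k)\<bar>)"
    by (rule summable_rabs_comparison_test[OF _ conjunct1[OF cs]]) (use pt in blast)
  show "summable (\<lambda>k. \<alpha> k * ys k (y k))" using summable_rabs_cancel[OF sabs] .
  have "\<bar>\<Sum>k. \<alpha> k * ys k (y k)\<bar> \<le> (\<Sum>k. \<bar>\<alpha> k * ys k (y k)\<bar>)" by (rule summable_rabs[OF sabs])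
  also have "\<dots> \<le> (\<Sum>k. \<alpha> k * norm (y k))" by (rule suminf_le[OF pt sabs conjunct1[OF cs]])
  also have "\<dots> \<le> sqrt (\<Sum>k. (\<alpha> k)\<^sup>2) * sqrt (\<Sum>k. (norm (y k))\<^sup>2)" using cs by simp
  also have "\<dots> \<le> 1 * sqrt (\<Sum>k. (norm (y k))\<^sup>2)" using sa1 suminf_nonneg[OF sy] by (intro mult_right_mono) auto
  finally have 1: "\<bar>\<Sum>k. \<alpha> k * ys k (y k)\<bar> \<le> sqrt (\<Sum>k. (norm (y k))\<^sup>2)" by simp
  have 2: "\<bar>blinfun_apply xs x\<bar> \<le> norm x" using lambda_bounds(1)[OF G L] .
  show "\<bar>blinfun_apply xs x + (\<Sum>k. \<alpha> k * ys k (y k))\<bar> \<le> norm x + sqrt (\<Sum>k. (norm (y k))\<^sup>2)"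
    using 1 2 by linarith
qed

lemma lambda_nonempty:
  assumes G: "gen_l2_setting Y N"
  shows "(0, (\<lambda>k v. 0), (\<lambda>k. 0)) \<in> Lambda_set Y N"
  by (rule lambda_memI[OF G]) (auto simp: dual_on_def intro: exI[of _ 0])

lemma sn_props:
  assumes G: "gen_l2_setting Y N" and XY: "(x, y) \<in> Sigma_sp Y"
  shows "sigma_norm Y N x y \<le> norm x + sqrt (\<Sum>k. (norm (y k))\<^sup>2)"
    and "(xs, ys, \<alpha>) \<in> Lambda_set Y N \<Longrightarrow> \<bar>blinfun_apply xs x + (\<Sum>k. \<alpha> k * ys k (y k))\<bar> \<le> sigma_norm Y N x y"
proof -
  let ?S = "{\<bar>blinfun_apply xs x + (\<Sum>k. \<alpha> k * ys k (y k))\<bar> | xs ys \<alpha>. (xs, ys, \<alpha>) \<in> Lambda_set Y N}"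
  have ne: "?S \<noteq> {}" using lambda_nonempty[OF G] by blast
  have ub: "r \<le> norm x + sqrt (\<Sum>k. (norm (y k))\<^sup>2)" if "r \<in> ?S" for r
    using that sn_elem(2)[OF G _ XY] by blast
  have bdd: "bdd_above ?S" by (rule bdd_aboveI) (rule ub)
  show "sigma_norm Y N x y \<le> norm x + sqrt (\<Sum>k. (norm (y k))\<^sup>2)"
    unfolding sigma_norm_def by (rule cSup_least[OF ne ub])
  assume "(xs, ys, \<alpha>) \<in> Lambda_set Y N"
  then show "\<bar>blinfun_apply xs x + (\<Sum>k. \<alpha> k * ys k (y k))\<bar> \<le> sigma_norm Y N x y"
    unfolding sigma_norm_def by (intro cSup_upper[OF _ bdd]) blast
qed




lemma sn_lower_x:
  fixes Y :: "nat \<Rightarrow> 'y::banach set" and N :: "nat \<Rightarrow> 'x::banach \<Rightarrow> 'y \<Rightarrow> real"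
  assumes G: "gen_l2_setting Y N" and XY: "(x, y) \<in> Sigma_sp Y"
  shows "norm x \<le> sigma_norm Y N x y"
proof -
  obtain f where f: "linear f" "\<And>v. \<bar>f v\<bar> \<le> norm v" "f x = norm x"
    using hahn_banach_norming[of x] by blast
  have bl: "bounded_linear f"
    by (rule bounded_linear_intro[where K=1]) (use f linear_add[OF f(1)] linear_scale[OF f(1)] in auto)
  define xs where "xs = Blinfun f"
  have xa: "blinfun_apply xs = f" unfolding xs_def using bounded_linear_Blinfun_apply[OF bl] .
  have "(xs, (\<lambda>k v. 0), (\<lambda>k. 0)) \<in> Lambda_set Y N"
  proof (rule lambda_memI[OF G])
    show "(\<lambda>v. 0) \<in> dual_on (Y k)" for k by (auto simp: dual_on_def intro: exI[of _ 0])
    fix k x' y' assume "y' \<in> Y k" "N k x' y' \<le> 1"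
    then show "\<bar>blinfun_apply xs x' + 0\<bar> \<le> 1" using f(2)[of x'] setting(4)[OF G, of y' k x'] xa by simp
  qed auto
  from sn_props(2)[OF G XY this] show ?thesis using xa f(3) by simp
qed

lemma sn_lower_y:
  fixes Y :: "nat \<Rightarrow> 'y::banach set" and N :: "nat \<Rightarrow> 'x::banach \<Rightarrow> 'y \<Rightarrow> real"
  assumes G: "gen_l2_setting Y N" and XY: "(x, y) \<in> Sigma_sp Y"
  shows "1/2 * sqrt (\<Sum>k. (norm (y k))\<^sup>2) \<le> sigma_norm Y N x y"
proof -
  have yk: "y k \<in> Y k" for k using XY unfolding Sigma_sp_def by auto
  have sy: "summable (\<lambda>k. (norm (y k))\<^sup>2)" using XY unfolding Sigma_sp_def by auto
  define T where "T = (\<Sum>k. (norm (y k))\<^sup>2)"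
  define s where "s = sqrt T"
  have T0: "0 \<le> T" unfolding T_def by (rule suminf_nonneg[OF sy]) simp
  show ?thesis
  proof (cases "T = 0")
    case True
    then show ?thesis using sn_lower_x[OF G XY] T_def by (simp add: order_trans[OF norm_ge_zero])
  next
    case False
    then have Tp: "T > 0" using T0 by simp
    have sp: "s > 0" and ss: "s * s = T" unfolding s_def using Tp by auto
    have "\<forall>k. \<exists>f. linear f \<and> (\<forall>v. \<bar>f v\<bar> \<le> norm v) \<and> f (y k) = norm (y k)"
      using hahn_banach_norming by blast
    then obtain F where F: "\<And>k. linear (F k)" "\<And>k v. \<bar>F k v\<bar> \<le> norm v" "\<And>k. F k (y k) = norm (y k)"
      by metis
    define ys where "ys k v = F k v / 2" for k v
    define \<alpha> where "\<alpha> k = norm (y k) / s" for k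
    have tk: "(norm (y k))\<^sup>2 \<le> T" for k
      using sum_le_suminf[OF sy, of "{k}"] unfolding T_def by simp
    have nk: "norm (y k) \<le> s" for k
      unfolding s_def using real_sqrt_le_mono[OF tk[of k]] by simp
    have sa: "summable (\<lambda>k. (\<alpha> k)\<^sup>2)" unfolding \<alpha>_def power_divide using sy by (rule summable_divide)
    have sa1: "(\<Sum>k. (\<alpha> k)\<^sup>2) = 1"
      unfolding \<alpha>_def power_divide suminf_divide[OF sy] T_def[symmetric]
      using ss Tp by (simp add: power2_eq_square)
    have L: "(0, ys, \<alpha>) \<in> Lambda_set Y N"
    proof (rule lambda_memI[OF G])
      show "ys k \<in> dual_on (Y k)" for k
        unfolding dual_on_def ys_def
        using F(1,2) linear_add[OF F(1)] linear_scale[OF F(1)]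
        by (auto intro!: exI[of _ "1/2"] simp: add_divide_distrib)
      fix k x' y' assume y': "y' \<in> Y k" "N k x' y' \<le> 1"
      have "\<bar>F k y'\<bar> \<le> 2 * N k x' y'" using F(2)[of k y'] ny[OF G y'(1), of x'] by simp
      then show "\<bar>blinfun_apply 0 x' + ys k y'\<bar> \<le> 1" unfolding ys_def using y'(2) by simp
    next
      show "0 \<le> \<alpha> k \<and> \<alpha> k \<le> 1" for k unfolding \<alpha>_def using sp nk[of k] by simp
    qed (use sa sa1 in auto)
    have "(\<Sum>k. \<alpha> k * ys k (y k)) = (\<Sum>k. (norm (y k))\<^sup>2 / (2 * s))"
      unfolding \<alpha>_def ys_def F(3) by (simp add: power2_eq_square mult.commute)
    also have "\<dots> = T / (2 * s)" unfolding T_def by (rule suminf_divide[OF sy])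
    also have "\<dots> = s / 2" using ss sp by (simp add: field_simps)
    finally have v: "(\<Sum>k. \<alpha> k * ys k (y k)) = s / 2" .
    from sn_props(2)[OF G XY L] show ?thesis using v sp unfolding s_def T_def by simp
  qed
qed




lemma sd_elem:
  fixes Y :: "nat \<Rightarrow> 'y::banach set" and N :: "nat \<Rightarrow> 'x::banach \<Rightarrow> 'y \<Rightarrow> real"
  assumes G: "gen_l2_setting Y N" and d: "\<And>k. ys k \<in> dual_on (Y k)"
    and sd: "summable (\<lambda>k. (dnorm_on (Y k) (ys k))\<^sup>2)"
    and XY: "(x, y) \<in> Sigma_sp Y" and n1: "sigma_norm Y N x y \<le> 1"
  shows "summable (\<lambda>k. ys k (y k))"
    and "\<bar>blinfun_apply xs x + (\<Sum>k. ys k (y k))\<bar> \<le> norm xs + 2 * sqrt (\<Sum>k. (dnorm_on (Y k) (ys k))\<^sup>2)"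
proof -
  have yk: "y k \<in> Y k" for k using XY unfolding Sigma_sp_def by auto
  have sy: "summable (\<lambda>k. (norm (y k))\<^sup>2)" using XY unfolding Sigma_sp_def by auto
  have S: "subspace (Y k)" for k using setting(1)[OF G] .
  note d0 = dnorm_on_props(2)[OF d S]
  note cs = CS_series[of "\<lambda>k. dnorm_on (Y k) (ys k)" "\<lambda>k. norm (y k)", OF d0 norm_ge_zero sd sy]
  have pt: "\<bar>ys k (y k)\<bar> \<le> dnorm_on (Y k) (ys k) * norm (y k)" for k
    using dnorm_on_props(3)[OF d S yk] .
  have sabs: "summable (\<lambda>k. \<bar>ys k (y k)\<bar>)"
    by (rule summable_rabs_comparison_test[OF _ conjunct1[OF cs]]) (use pt in blast)
  show "summable (\<lambda>k. ys k (y k))" using summable_rabs_cancel[OF sabs] .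
  have s2: "sqrt (\<Sum>k. (norm (y k))\<^sup>2) \<le> 2" using sn_lower_y[OF G XY] n1 by simp
  have x1: "norm x \<le> 1" using sn_lower_x[OF G XY] n1 by simp
  have D0: "0 \<le> sqrt (\<Sum>k. (dnorm_on (Y k) (ys k))\<^sup>2)" using suminf_nonneg[OF sd] by simp
  have "\<bar>\<Sum>k. ys k (y k)\<bar> \<le> (\<Sum>k. \<bar>ys k (y k)\<bar>)" by (rule summable_rabs[OF sabs])
  also have "\<dots> \<le> (\<Sum>k. dnorm_on (Y k) (ys k) * norm (y k))" by (rule suminf_le[OF pt sabs conjunct1[OF cs]])
  also have "\<dots> \<le> sqrt (\<Sum>k. (dnorm_on (Y k) (ys k))\<^sup>2) * sqrt (\<Sum>k. (norm (y k))\<^sup>2)" using cs by simp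
  also have "\<dots> \<le> sqrt (\<Sum>k. (dnorm_on (Y k) (ys k))\<^sup>2) * 2" using s2 D0 by (intro mult_left_mono) auto
  finally have 1: "\<bar>\<Sum>k. ys k (y k)\<bar> \<le> 2 * sqrt (\<Sum>k. (dnorm_on (Y k) (ys k))\<^sup>2)" by simp
  have "\<bar>blinfun_apply xs x\<bar> \<le> norm xs * norm x" using norm_blinfun[of xs x] by simp
  also have "\<dots> \<le> norm xs * 1" using x1 by (intro mult_left_mono) auto
  finally have 2: "\<bar>blinfun_apply xs x\<bar> \<le> norm xs" by simp
  show "\<bar>blinfun_apply xs x + (\<Sum>k. ys k (y k))\<bar> \<le> norm xs + 2 * sqrt (\<Sum>k. (dnorm_on (Y k) (ys k))\<^sup>2)"
    using 1 2 by linarith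
qed

lemma sd_props:
  fixes Y :: "nat \<Rightarrow> 'y::banach set" and N :: "nat \<Rightarrow> 'x::banach \<Rightarrow> 'y \<Rightarrow> real"
  assumes G: "gen_l2_setting Y N" and d: "\<And>k. ys k \<in> dual_on (Y k)"
    and sd: "summable (\<lambda>k. (dnorm_on (Y k) (ys k))\<^sup>2)"
  shows "sigma_dual_norm Y N xs ys \<le> norm xs + 2 * sqrt (\<Sum>k. (dnorm_on (Y k) (ys k))\<^sup>2)"
    and "(x, y) \<in> Sigma_sp Y \<Longrightarrow> sigma_norm Y N x y \<le> 1 \<Longrightarrow>
         \<bar>blinfun_apply xs x + (\<Sum>k. ys k (y k))\<bar> \<le> sigma_dual_norm Y N xs ys"
proof -
  let ?S = "{\<bar>blinfun_apply xs x + (\<Sum>k. ys k (y k))\<bar> | x y. (x, y) \<in> Sigma_sp Y \<and> sigma_norm Y N x y \<le> 1}"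
  have z: "(0, (\<lambda>k. 0)) \<in> Sigma_sp Y" unfolding Sigma_sp_def using subspace_0[OF setting(1)[OF G]] by auto
  have "sigma_norm Y N 0 (\<lambda>k. 0) \<le> 1" using sn_props(1)[OF G z] by simp
  then have ne: "?S \<noteq> {}" using z by blast
  have ub: "r \<le> norm xs + 2 * sqrt (\<Sum>k. (dnorm_on (Y k) (ys k))\<^sup>2)" if "r \<in> ?S" for r
    using that sd_elem(2)[OF G d sd] by blast
  have bdd: "bdd_above ?S" by (rule bdd_aboveI) (rule ub)
  show "sigma_dual_norm Y N xs ys \<le> norm xs + 2 * sqrt (\<Sum>k. (dnorm_on (Y k) (ys k))\<^sup>2)"
    unfolding sigma_dual_norm_def by (rule cSup_least[OF ne ub])
  assume "(x, y) \<in> Sigma_sp Y" "sigma_norm Y N x y \<le> 1"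
  then show "\<bar>blinfun_apply xs x + (\<Sum>k. ys k (y k))\<bar> \<le> sigma_dual_norm Y N xs ys"
    unfolding sigma_dual_norm_def by (intro cSup_upper[OF _ bdd]) blast
qed

lemma sd_lower_x:
  fixes Y :: "nat \<Rightarrow> 'y::banach set" and N :: "nat \<Rightarrow> 'x::banach \<Rightarrow> 'y \<Rightarrow> real"
  assumes G: "gen_l2_setting Y N" and d: "\<And>k. ys k \<in> dual_on (Y k)"
    and sd: "summable (\<lambda>k. (dnorm_on (Y k) (ys k))\<^sup>2)"
  shows "norm xs \<le> sigma_dual_norm Y N xs ys"
proof -
  have S: "subspace (Y k)" for k using setting(1)[OF G] .
  have ys0: "ys k 0 = 0" for k using dual_on_zero[OF d S] .
  have z: "(x, (\<lambda>k. 0)) \<in> Sigma_sp Y" for x unfolding Sigma_sp_def using subspace_0[OF S] by auto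
  have el: "\<bar>blinfun_apply xs x\<bar> \<le> sigma_dual_norm Y N xs ys" if "norm x \<le> 1" for x
  proof -
    have "sigma_norm Y N x (\<lambda>k. 0) \<le> 1" using sn_props(1)[OF G z[of x]] that by simp
    from sd_props(2)[OF G d sd z this] show ?thesis using ys0 by simp
  qed
  have K0: "0 \<le> sigma_dual_norm Y N xs ys" using el[of 0] by simp
  show ?thesis
  proof (rule norm_blinfun_bound[OF K0])
    fix x
    have "\<bar>blinfun_apply xs x\<bar> \<le> sigma_dual_norm Y N xs ys * norm x"
      by (rule unit_scale[where S=UNIV]) (auto simp: blinfun.scaleR_right intro: el)
    then show "norm (blinfun_apply xs x) \<le> sigma_dual_norm Y N xs ys * norm x" by simp
  qed
qed




lemma dual_approx:
  assumes d: "f \<in> dual_on S" and S: "subspace S" and e: "\<epsilon> > 0"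
  shows "\<exists>a\<in>S. norm a \<le> 1 \<and> dnorm_on S f - \<epsilon> \<le> f a"
proof -
  let ?A = "{\<bar>f a\<bar> | a. a \<in> S \<and> norm a \<le> 1}"
  have ne: "?A \<noteq> {}" using subspace_0[OF S] by auto
  have "dnorm_on S f - \<epsilon> < Sup ?A" using e unfolding dnorm_on_def by simp
  then obtain r where "r \<in> ?A" "dnorm_on S f - \<epsilon> < r"
    using less_cSup_iff[OF ne dnorm_on_props(1)[OF d S]] by blast
  then obtain a where a: "a \<in> S" "norm a \<le> 1" "dnorm_on S f - \<epsilon> < \<bar>f a\<bar>" by blast
  show ?thesis
  proof (cases "0 \<le> f a")
    case True then show ?thesis using a by (intro bexI[of _ a]) auto
  next
    case False
    have "-a \<in> S" using subspace_neg[OF S a(1)] .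
    moreover have "f (-a) = - f a" using dual_on_hom[OF d a(1), of "-1"] by simp
    ultimately show ?thesis using a False by (intro bexI[of _ "-a"]) auto
  qed
qed

lemma sd_lower_D:
  fixes Y :: "nat \<Rightarrow> 'y::banach set" and N :: "nat \<Rightarrow> 'x::banach \<Rightarrow> 'y \<Rightarrow> real"
  assumes G: "gen_l2_setting Y N" and d: "\<And>k. ys k \<in> dual_on (Y k)"
    and sd: "summable (\<lambda>k. (dnorm_on (Y k) (ys k))\<^sup>2)"
  shows "sqrt (\<Sum>k. (dnorm_on (Y k) (ys k))\<^sup>2) \<le> sigma_dual_norm Y N xs ys"
proof -
  define K where "K = sigma_dual_norm Y N xs ys"
  define dk where "dk k = dnorm_on (Y k) (ys k)" for k
  have S: "subspace (Y k)" for k using setting(1)[OF G] .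
  have ys0: "ys k 0 = 0" for k using dual_on_zero[OF d S] .
  have dk0: "0 \<le> dk k" for k unfolding dk_def using dnorm_on_props(2)[OF d S] .
  have K0: "0 \<le> K" unfolding K_def using sd_lower_x[OF G d sd, of xs] norm_ge_zero[of xs] by linarith
  have fin: "(\<Sum>k<n. (dk k)\<^sup>2) \<le> K\<^sup>2" for n
  proof -
    define P where "P = (\<Sum>k<n. (dk k)\<^sup>2)"
    define Dn where "Dn = sqrt P"
    have P0: "0 \<le> P" unfolding P_def by (simp add: sum_nonneg)
    show ?thesis
    proof (cases "P = 0")
      case True then show ?thesis unfolding P_def by simp
    next
      case False
      then have Pp: "P > 0" using P0 by simp
      have Dp: "Dn > 0" and DD: "Dn * Dn = P" unfolding Dn_def using Pp by auto
      have "Dn \<le> K"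
      proof (rule field_le_epsilon)
        fix e :: real assume e: "0 < e"
        define T where "T = (\<Sum>k<n. dk k / Dn)"
        have T0: "0 \<le> T" unfolding T_def using dk0 Dp by (simp add: sum_nonneg)
        define \<epsilon> where "\<epsilon> = e / (T + 1)"
        have ep: "\<epsilon> > 0" unfolding \<epsilon>_def using e T0 by simp
        have "\<forall>k. \<exists>a. a \<in> Y k \<and> norm a \<le> 1 \<and> dk k - \<epsilon> \<le> ys k a"
          unfolding dk_def using dual_approx[OF d S ep] by blast
        then obtain A where A: "\<And>k. A k \<in> Y k" "\<And>k. norm (A k) \<le> 1" "\<And>k. dk k - \<epsilon> \<le> ys k (A k)"
          by metis
        define y where "y k = (if k < n then (dk k / Dn) *\<^sub>R A k else 0)" for k
        have yk: "y k \<in> Y k" for k unfolding y_def using subspace_scale[OF S A(1)] subspace_0[OF S] by auto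
        have yz: "k \<notin> {..<n} \<Longrightarrow> y k = 0" for k unfolding y_def by simp
        have sy: "summable (\<lambda>k. (norm (y k))\<^sup>2)" by (rule summable_finite[of "{..<n}"]) (use yz in auto)
        have XY: "(0, y) \<in> Sigma_sp Y" unfolding Sigma_sp_def using yk sy by auto
        have "(\<Sum>k. (norm (y k))\<^sup>2) = (\<Sum>k<n. (norm (y k))\<^sup>2)" by (rule suminf_finite) (use yz in auto)
        also have "\<dots> \<le> (\<Sum>k<n. (dk k)\<^sup>2 / P)"
        proof (rule sum_mono)
          fix k assume "k \<in> {..<n}"
          then have "(norm (y k))\<^sup>2 = (dk k / Dn)\<^sup>2 * (norm (A k))\<^sup>2"
            unfolding y_def using dk0[of k] Dp by (simp add: power_mult_distrib power_divide)
          also have "\<dots> \<le> (dk k / Dn)\<^sup>2 * 1" using A(2)[of k] by (intro mult_left_mono) (auto simp: power_le_one)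
          also have "\<dots> = (dk k)\<^sup>2 / P" using DD by (simp add: power_divide power2_eq_square)
          finally show "(norm (y k))\<^sup>2 \<le> (dk k)\<^sup>2 / P" .
        qed
        also have "\<dots> = 1" unfolding sum_divide_distrib[symmetric] P_def[symmetric] using Pp by simp
        finally have "(\<Sum>k. (norm (y k))\<^sup>2) \<le> 1" .
        then have "sqrt (\<Sum>k. (norm (y k))\<^sup>2) \<le> 1" by simp
        then have n1: "sigma_norm Y N 0 y \<le> 1" using sn_props(1)[OF G XY] by (simp del: real_sqrt_le_1_iff)
        have "(\<Sum>k. ys k (y k)) = (\<Sum>k<n. ys k (y k))" by (rule suminf_finite) (use yz ys0 in auto)
        also have "\<dots> = (\<Sum>k<n. (dk k / Dn) * ys k (A k))"
          by (rule sum.cong) (auto simp: y_def dual_on_hom[OF d A(1)])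
        also have "\<dots> \<ge> (\<Sum>k<n. (dk k / Dn) * (dk k - \<epsilon>))"
        proof (rule sum_mono)
          fix k
          have "0 \<le> dk k / Dn" using dk0[of k] Dp by simp
          from mult_left_mono[OF A(3)[of k] this] show "dk k / Dn * (dk k - \<epsilon>) \<le> dk k / Dn * ys k (A k)" .
        qed
        finally have v1: "(\<Sum>k<n. (dk k / Dn) * (dk k - \<epsilon>)) \<le> (\<Sum>k. ys k (y k))" .
        have "(\<Sum>k<n. (dk k / Dn) * (dk k - \<epsilon>)) = (\<Sum>k<n. (dk k)\<^sup>2) / Dn - \<epsilon> * T"
          unfolding T_def by (simp add: sum_subtractf sum_distrib_left sum_divide_distrib right_diff_distrib power2_eq_square mult.commute diff_divide_distrib)
        also have "(\<Sum>k<n. (dk k)\<^sup>2) / Dn = Dn" using DD Dp unfolding P_def[symmetric] by (simp add: field_simps)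
        finally have v2: "Dn - \<epsilon> * T \<le> (\<Sum>k. ys k (y k))" using v1 by simp
        have "\<bar>blinfun_apply xs 0 + (\<Sum>k. ys k (y k))\<bar> \<le> K"
          unfolding K_def by (rule sd_props(2)[OF G d sd XY n1])
        then have "Dn - \<epsilon> * T \<le> K" using v2 by simp
        moreover have "\<epsilon> * T \<le> e"
        proof -
          have "\<epsilon> * T = e * (T / (T + 1))" unfolding \<epsilon>_def by simp
          also have "\<dots> \<le> e * 1" using T0 e by (intro mult_left_mono) auto
          finally show ?thesis by simp
        qed
        ultimately show "Dn \<le> K + e" by linarith
      qed
      then have "Dn * Dn \<le> K * K" using Dp by (intro mult_mono) auto
      then show ?thesis using DD unfolding P_def by (simp add: power2_eq_square)
    qed
  qed
  have "(\<Sum>k. (dk k)\<^sup>2) \<le> K\<^sup>2" by (rule suminf_le_const) (use sd fin dk_def in auto)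
  then have "sqrt (\<Sum>k. (dk k)\<^sup>2) \<le> sqrt (K\<^sup>2)" by (rule real_sqrt_le_mono)
  then show ?thesis using K0 unfolding K_def dk_def by simp
qed




theorem lemma2p2:
  fixes Y :: "nat \<Rightarrow> 'y::banach set" and N :: "nat \<Rightarrow> 'x::banach \<Rightarrow> 'y \<Rightarrow> real"
  assumes "gen_l2_setting Y N"
  shows "(\<forall>x y. (x, y) \<in> Sigma_sp Y \<longrightarrow>
            max (norm x) (1/2 * sqrt (\<Sum>k. (norm (y k))\<^sup>2)) \<le> sigma_norm Y N x y \<and>
            sigma_norm Y N x y \<le> norm x + sqrt (\<Sum>k. (norm (y k))\<^sup>2))
       \<and> (\<exists>c>0. \<exists>C>0. \<forall>x y. (x, y) \<in> Sigma_sp Y \<longrightarrow>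
            c * sqrt ((norm x)\<^sup>2 + (\<Sum>k. (norm (y k))\<^sup>2)) \<le> sigma_norm Y N x y \<and>
            sigma_norm Y N x y \<le> C * sqrt ((norm x)\<^sup>2 + (\<Sum>k. (norm (y k))\<^sup>2)))
       \<and> (\<forall>xs ys. (\<forall>k. ys k \<in> dual_on (Y k)) \<and> summable (\<lambda>k. (dnorm_on (Y k) (ys k))\<^sup>2) \<longrightarrow>
            max (norm xs) (sqrt (\<Sum>k. (dnorm_on (Y k) (ys k))\<^sup>2)) \<le> sigma_dual_norm Y N xs ys \<and>
            sigma_dual_norm Y N xs ys \<le> norm xs + 2 * sqrt (\<Sum>k. (dnorm_on (Y k) (ys k))\<^sup>2))"
proof (intro conjI)
  note G = assms
  show A: "\<forall>x y. (x, y) \<in> Sigma_sp Y \<longrightarrow>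
            max (norm x) (1/2 * sqrt (\<Sum>k. (norm (y k))\<^sup>2)) \<le> sigma_norm Y N x y \<and>
            sigma_norm Y N x y \<le> norm x + sqrt (\<Sum>k. (norm (y k))\<^sup>2)"
    using sn_lower_x[OF G] sn_lower_y[OF G] sn_props(1)[OF G] by simp
  show "\<exists>c>0. \<exists>C>0. \<forall>x y. (x, y) \<in> Sigma_sp Y \<longrightarrow>
            c * sqrt ((norm x)\<^sup>2 + (\<Sum>k. (norm (y k))\<^sup>2)) \<le> sigma_norm Y N x y \<and>
            sigma_norm Y N x y \<le> C * sqrt ((norm x)\<^sup>2 + (\<Sum>k. (norm (y k))\<^sup>2))"
  proof (rule exI[of _ "1/4::real"], intro conjI exI[of _ "2::real"] allI impI)
    fix x :: 'x and y :: "nat \<Rightarrow> 'y" assume XY: "(x, y) \<in> Sigma_sp Y"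
    have sy: "summable (\<lambda>k. (norm (y k))\<^sup>2)" using XY unfolding Sigma_sp_def by auto
    define T where "T = (\<Sum>k. (norm (y k))\<^sup>2)"
    define a where "a = norm x"
    define s where "s = sqrt T"
    have T0: "0 \<le> T" unfolding T_def by (rule suminf_nonneg[OF sy]) simp
    have a0: "0 \<le> a" unfolding a_def by simp
    have s0: "0 \<le> s" and sT: "s\<^sup>2 = T" unfolding s_def using T0 by auto
    have "a\<^sup>2 + T \<le> (a + s)\<^sup>2" using sT a0 s0 by (simp add: power2_eq_square algebra_simps)
    then have u: "sqrt (a\<^sup>2 + T) \<le> a + s" using real_sqrt_le_mono a0 s0 by fastforce
    have la: "a \<le> sqrt (a\<^sup>2 + T)" using real_sqrt_le_mono[of "a\<^sup>2" "a\<^sup>2 + T"] T0 a0 by simp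
    have ls: "s \<le> sqrt (a\<^sup>2 + T)" unfolding s_def using real_sqrt_le_mono[of T "a\<^sup>2 + T"] by simp
    have m: "max a (1/2 * s) \<le> sigma_norm Y N x y" and up: "sigma_norm Y N x y \<le> a + s"
      using A XY unfolding a_def s_def T_def by auto
    have "1/4 * sqrt (a\<^sup>2 + T) \<le> max a (1/2 * s)"
    proof -
      define M where "M = max a (1/2 * s)"
      have "a \<le> M" "s \<le> 2 * M" unfolding M_def by auto
      then have "1/4 * sqrt (a\<^sup>2 + T) \<le> M" using u a0 by linarith
      then show ?thesis unfolding M_def .
    qed
    then show "1/4 * sqrt ((norm x)\<^sup>2 + (\<Sum>k. (norm (y k))\<^sup>2)) \<le> sigma_norm Y N x y"
      using m unfolding a_def T_def by linarith
    show "sigma_norm Y N x y \<le> 2 * sqrt ((norm x)\<^sup>2 + (\<Sum>k. (norm (y k))\<^sup>2))"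
      using up la ls unfolding a_def T_def by linarith
  qed simp_all
  show "\<forall>xs ys. (\<forall>k. ys k \<in> dual_on (Y k)) \<and> summable (\<lambda>k. (dnorm_on (Y k) (ys k))\<^sup>2) \<longrightarrow>
            max (norm xs) (sqrt (\<Sum>k. (dnorm_on (Y k) (ys k))\<^sup>2)) \<le> sigma_dual_norm Y N xs ys \<and>
            sigma_dual_norm Y N xs ys \<le> norm xs + 2 * sqrt (\<Sum>k. (dnorm_on (Y k) (ys k))\<^sup>2)"
  proof (intro allI impI)
    fix xs :: "'x \<Rightarrow>\<^sub>L real" and ys :: "nat \<Rightarrow> 'y \<Rightarrow> real"
    assume h: "(\<forall>k. ys k \<in> dual_on (Y k)) \<and> summable (\<lambda>k. (dnorm_on (Y k) (ys k))\<^sup>2)"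
    then have d: "\<And>k. ys k \<in> dual_on (Y k)" and sd: "summable (\<lambda>k. (dnorm_on (Y k) (ys k))\<^sup>2)" by auto
    show "max (norm xs) (sqrt (\<Sum>k. (dnorm_on (Y k) (ys k))\<^sup>2)) \<le> sigma_dual_norm Y N xs ys \<and>
            sigma_dual_norm Y N xs ys \<le> norm xs + 2 * sqrt (\<Sum>k. (dnorm_on (Y k) (ys k))\<^sup>2)"
      using sd_lower_x[OF G d sd] sd_lower_D[OF G d sd] sd_props(1)[OF G d sd] by simp
  qed
qed


end
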